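(* Let $\lambda_1\ge\lambda_2\ge\cdots\ge\lambda_d>0$, $k\in[d]$, and $c\in(0,1)$. Then $$\frac1k\sum_{i=k+1}^d\lambda_i\le\Big(\frac1k\sum_{i=1}^d\lambda_i^c\Big)^{1/c}.$$ *)

theory Defs
  imports Complex_Main
begin

end

theory Submission
  imports Defs
begin

theorem lemma4p11:
  fixes lam :: "nat \<Rightarrow> real" and d k :: nat and c :: real
  assumes mono: "\<And>i j. 1 \<le> i \<Longrightarrow> i \<le> j \<Longrightarrow> j \<le> d \<Longrightarrow> lam j \<le> lam i"
    and pos: "\<And>i. 1 \<le> i \<Longrightarrow> i \<le> d \<Longrightarrow> lam i > 0"
    and k: "1 \<le> k" "k \<le> d"
    and c: "0 < c" "c < 1"
  shows "(1 / real k) * (\<Sum>i = k+1..d. lam i)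
           \<le> ((1 / real k) * (\<Sum>i = 1..d. lam i powr c)) powr (1 / c)"
proof -
  define m where "m = lam k"
  have m0: "m > 0" using pos k by (simp add: m_def)
  define T where "T = (\<Sum>i = k+1..d. lam i powr c)"
  define S where "S = (\<Sum>i = 1..d. lam i powr c)"
  define A where "A = S / real k"
  have kpos: "real k > 0" using k by simp
  have h1: "lam i \<le> m powr (1-c) * lam i powr c" if "i \<in> {k+1..d}" for i
  proof -
    have li: "lam i > 0" using pos that k by auto
    have "lam i \<le> m" using mono[of k i] that k by (auto simp: m_def)
    then have "lam i powr (1-c) \<le> m powr (1-c)" using li c by (intro powr_mono2) auto
    moreover have "lam i = lam i powr (1-c) * lam i powr c"
      using li by (simp add: powr_add[symmetric])
    ultimately show ?thesis using li
      by (metis mult_right_mono powr_ge_zero)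
  qed
  have h2: "(\<Sum>i = k+1..d. lam i) \<le> m powr (1-c) * T"
    unfolding T_def sum_distrib_left by (rule sum_mono) (use h1 in auto)
  have h3: "real k * m powr c \<le> (\<Sum>i = 1..k. lam i powr c)"
  proof -
    have "(\<Sum>i = 1..k. m powr c) \<le> (\<Sum>i = 1..k. lam i powr c)"
    proof (rule sum_mono)
      fix i assume i: "i \<in> {1..k}"
      have "m \<le> lam i" using mono[of i k] i k by (auto simp: m_def)
      then show "m powr c \<le> lam i powr c" using m0 c by (intro powr_mono2) auto
    qed
    then show ?thesis by simp
  qed
  have split: "S = (\<Sum>i = 1..k. lam i powr c) + T"
    unfolding S_def T_def using k
  proof -
    have "{1..d} = {1..k} \<union> {k+1..d}" using k by auto
    then show "(\<Sum>i = 1..d. lam i powr c) = (\<Sum>i = 1..k. lam i powr c) + (\<Sum>i = k+1..d. lam i powr c)"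
      by (simp add: sum.union_disjoint ivl_disj_int)
  qed
  have T0: "T \<ge> 0" unfolding T_def by (intro sum_nonneg) auto
  have h4: "m powr c \<le> A" using h3 split T0 kpos unfolding A_def by (simp add: field_simps)
  have TA: "T / real k \<le> A" using split h3 m0 kpos unfolding A_def
    by (smt (verit) divide_right_mono mult_nonneg_nonneg of_nat_0_le_iff powr_ge_zero)
  have A0: "A > 0" using h4 m0 by (smt (verit) powr_gt_zero)
  have h5: "m powr (1-c) \<le> A powr ((1-c)/c)"
  proof -
    have "m powr (1-c) = (m powr c) powr ((1-c)/c)" using c by (simp add: powr_powr)
    also have "\<dots> \<le> A powr ((1-c)/c)" using h4 c by (intro powr_mono2) auto
    finally show ?thesis .
  qed
  have "(1 / real k) * (\<Sum>i = k+1..d. lam i) \<le> m powr (1-c) * (T / real k)"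
    using h2 kpos by (simp add: field_simps)
  also have "\<dots> \<le> A powr ((1-c)/c) * A"
    using h5 TA T0 kpos by (intro mult_mono) auto
  also have "\<dots> = A powr (1/c)"
  proof -
    have "A powr ((1-c)/c) * A = A powr ((1-c)/c) * A powr 1" using A0 by simp
    also have "\<dots> = A powr ((1-c)/c + 1)" by (simp add: powr_add)
    also have "(1-c)/c + 1 = 1/c" using c by (simp add: field_simps)
    finally show ?thesis .
  qed
  finally show ?thesis unfolding A_def S_def by simp
qed

end
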